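(* Let $A$ be an abelian group which is not cotorsion and let $\lambda>\aleph_0$ be a cardinal. Then there exist a directed poset $\mathcal{T}$ with $|\mathcal{T}|=\lambda$ and a diagram $X:\mathcal{T}\to\mathbf{Set}^f_*$ of finite pointed sets such that $H(X,A)$ is not cotorsion.
   Context: A directed poset is regarded as a category with a single morphism $t\to s$ whenever $t\ge s$. For a pointed set $Y$, $Y\wedge A:=\bigoplus_{Y\setminus\{*\}}A$ (finitely supported pointed maps $Y\to A$), functorial via $f_*(sv)=f(s)v$, where $sv$ is the element with value $v$ at $s$ ($*v=0$). $H(X,A):=\lim_\mathcal{T}(X\wedge A)/\mathrm{Im}\,\rho$, where $\rho:(\lim_\mathcal{T}X)\wedge A\to\lim_\mathcal{T}(X\wedge A)$, $\rho(xv)(t)=x(t)v$. A group $C$ is cotorsion if $\mathrm{Ext}(\mathbb{Q},C)=0$. *)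

theory Defs
  imports "HOL-Algebra.Algebra" "HOL-Library.Equipollence"
begin

definition Qgroup :: "rat monoid" where
  "Qgroup = \<lparr>carrier = UNIV, monoid.mult = (+), monoid.one = 0\<rparr>"

text \<open>C is cotorsion iff Ext(Q,C) = 0, i.e. every abelian extension
  0 -> C -> E -> Q -> 0 splits.  Every such extension is isomorphic (as an extension)
  to one whose underlying set is carrier C x Q, with inclusion c -> (c,0) and
  projection snd; so we quantify over exactly those.\<close>

definition cotorsion :: "('c, 'm) monoid_scheme \<Rightarrow> bool" where
  "cotorsion C \<longleftrightarrow>
     (\<forall>E :: ('c \<times> rat) monoid.
        comm_group E \<and> carrier E = carrier C \<times> (UNIV :: rat set)
        \<and> (\<lambda>c. (c, 0)) \<in> hom C E \<and> snd \<in> hom E Qgroup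
        \<longrightarrow> (\<exists>s \<in> hom Qgroup E. \<forall>q. snd (s q) = q))"

definition smash :: "'y set \<Rightarrow> 'y \<Rightarrow> ('a, 'm) monoid_scheme \<Rightarrow> ('y \<Rightarrow> 'a) set" where
  "smash Y y0 A = {\<phi> \<in> Y \<rightarrow>\<^sub>E carrier A. \<phi> y0 = \<one>\<^bsub>A\<^esub> \<and> finite {y \<in> Y. \<phi> y \<noteq> \<one>\<^bsub>A\<^esub>}}"

definition smash_group :: "'y set \<Rightarrow> 'y \<Rightarrow> ('a, 'm) monoid_scheme \<Rightarrow> ('y \<Rightarrow> 'a) monoid" where
  "smash_group Y y0 A = \<lparr>carrier = smash Y y0 A,
      monoid.mult = (\<lambda>\<phi> \<psi>. \<lambda>y\<in>Y. monoid.mult A (\<phi> y) (\<psi> y)),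
      monoid.one = (\<lambda>y\<in>Y. \<one>\<^bsub>A\<^esub>)\<rparr>"

text \<open>Functoriality: f_*(s v) = f(s) v, extended additively.\<close>
definition smash_map :: "'y set \<Rightarrow> 'z set \<Rightarrow> 'z \<Rightarrow> ('y \<Rightarrow> 'z) \<Rightarrow> ('a, 'm) monoid_scheme
    \<Rightarrow> ('y \<Rightarrow> 'a) \<Rightarrow> ('z \<Rightarrow> 'a)" where
  "smash_map Y Z z0 f A \<phi> =
     (\<lambda>z\<in>Z. if z = z0 then \<one>\<^bsub>A\<^esub> else finprod A \<phi> {y \<in> Y. f y = z \<and> \<phi> y \<noteq> \<one>\<^bsub>A\<^esub>})"

definition directed_poset :: "'t set \<Rightarrow> ('t \<Rightarrow> 't \<Rightarrow> bool) \<Rightarrow> bool" where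
  "directed_poset T leq \<longleftrightarrow> T \<noteq> {}
     \<and> (\<forall>t\<in>T. leq t t)
     \<and> (\<forall>s\<in>T. \<forall>t\<in>T. leq s t \<and> leq t s \<longrightarrow> s = t)
     \<and> (\<forall>r\<in>T. \<forall>s\<in>T. \<forall>t\<in>T. leq r s \<and> leq s t \<longrightarrow> leq r t)
     \<and> (\<forall>s\<in>T. \<forall>t\<in>T. \<exists>u\<in>T. leq s u \<and> leq t u)"

definition finite_pointed_diagram :: "'t set \<Rightarrow> ('t \<Rightarrow> 't \<Rightarrow> bool) \<Rightarrow> ('t \<Rightarrow> 'x set) \<Rightarrow> ('t \<Rightarrow> 'x)
    \<Rightarrow> ('t \<Rightarrow> 't \<Rightarrow> 'x \<Rightarrow> 'x) \<Rightarrow> bool" where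
  "finite_pointed_diagram T leq D bp f \<longleftrightarrow>
     (\<forall>t\<in>T. finite (D t) \<and> bp t \<in> D t)
     \<and> (\<forall>s\<in>T. \<forall>t\<in>T. leq s t \<longrightarrow> (\<forall>x\<in>D t. f t s x \<in> D s) \<and> f t s (bp t) = bp s)
     \<and> (\<forall>t\<in>T. \<forall>x\<in>D t. f t t x = x)
     \<and> (\<forall>r\<in>T. \<forall>s\<in>T. \<forall>t\<in>T. leq r s \<and> leq s t \<longrightarrow> (\<forall>x\<in>D t. f s r (f t s x) = f t r x))"

definition plim :: "'t set \<Rightarrow> ('t \<Rightarrow> 't \<Rightarrow> bool) \<Rightarrow> ('t \<Rightarrow> 'x set) \<Rightarrow> ('t \<Rightarrow> 't \<Rightarrow> 'x \<Rightarrow> 'x)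
    \<Rightarrow> ('t \<Rightarrow> 'x) set" where
  "plim T leq D f = {x \<in> (\<Pi>\<^sub>E t\<in>T. D t). \<forall>s\<in>T. \<forall>t\<in>T. leq s t \<longrightarrow> f t s (x t) = x s}"

definition plim_bp :: "'t set \<Rightarrow> ('t \<Rightarrow> 'x) \<Rightarrow> ('t \<Rightarrow> 'x)" where
  "plim_bp T bp = (\<lambda>t\<in>T. bp t)"

definition lim_smash_group :: "'t set \<Rightarrow> ('t \<Rightarrow> 't \<Rightarrow> bool) \<Rightarrow> ('t \<Rightarrow> 'x set) \<Rightarrow> ('t \<Rightarrow> 'x)
    \<Rightarrow> ('t \<Rightarrow> 't \<Rightarrow> 'x \<Rightarrow> 'x) \<Rightarrow> ('a, 'm) monoid_scheme \<Rightarrow> ('t \<Rightarrow> 'x \<Rightarrow> 'a) monoid" where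
  "lim_smash_group T leq D bp f A =
     \<lparr>carrier = {a \<in> (\<Pi>\<^sub>E t\<in>T. smash (D t) (bp t) A).
                  \<forall>s\<in>T. \<forall>t\<in>T. leq s t \<longrightarrow> smash_map (D t) (D s) (bp s) (f t s) A (a t) = a s},
      monoid.mult = (\<lambda>a b. \<lambda>t\<in>T. monoid.mult (smash_group (D t) (bp t) A) (a t) (b t)),
      monoid.one = (\<lambda>t\<in>T. monoid.one (smash_group (D t) (bp t) A))\<rparr>"

definition rho :: "'t set \<Rightarrow> ('t \<Rightarrow> 't \<Rightarrow> bool) \<Rightarrow> ('t \<Rightarrow> 'x set) \<Rightarrow> ('t \<Rightarrow> 'x)
    \<Rightarrow> ('t \<Rightarrow> 't \<Rightarrow> 'x \<Rightarrow> 'x) \<Rightarrow> ('a, 'm) monoid_scheme \<Rightarrow> (('t \<Rightarrow> 'x) \<Rightarrow> 'a) \<Rightarrow> ('t \<Rightarrow> 'x \<Rightarrow> 'a)" where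
  "rho T leq D bp f A \<psi> = (\<lambda>t\<in>T. smash_map (plim T leq D f) (D t) (bp t) (\<lambda>x. x t) A \<psi>)"

definition H_group :: "'t set \<Rightarrow> ('t \<Rightarrow> 't \<Rightarrow> bool) \<Rightarrow> ('t \<Rightarrow> 'x set) \<Rightarrow> ('t \<Rightarrow> 'x)
    \<Rightarrow> ('t \<Rightarrow> 't \<Rightarrow> 'x \<Rightarrow> 'x) \<Rightarrow> ('a, 'm) monoid_scheme \<Rightarrow> ('t \<Rightarrow> 'x \<Rightarrow> 'a) set monoid" where
  "H_group T leq D bp f A =
     lim_smash_group T leq D bp f A Mod
       (rho T leq D bp f A ` smash (plim T leq D f) (plim_bp T bp) A)"

end

theory Submission
  imports Defs "HOL-Algebra.Free_Abelian_Groups"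
begin

definition lab :: "'k set \<Rightarrow> 'k \<Rightarrow> nat" where
  "lab S = (SOME h. inj_on h S \<and> 0 \<notin> h ` S)"

lemma lab: assumes "finite S" shows "inj_on (lab S) S" "0 \<notin> lab S ` S"
proof -
  obtain g :: "'a \<Rightarrow> nat" and n where "inj_on g S" using finite_imp_inj_to_nat_seg[OF assms] by blast
  hence "inj_on (Suc o g) S \<and> 0 \<notin> (Suc o g) ` S" by (auto simp: inj_on_def)
  hence "inj_on (lab S) S \<and> 0 \<notin> lab S ` S" unfolding lab_def by (rule someI[where P="\<lambda>h. inj_on h S \<and> 0 \<notin> h ` S"])
  thus "inj_on (lab S) S" "0 \<notin> lab S ` S" by auto
qed

definition Lb :: "('k \<Rightarrow> 'k set) \<Rightarrow> 'k \<Rightarrow> 'k \<Rightarrow> nat" where "Lb \<beta> t = lab (\<beta> t)"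
definition Db :: "('k \<Rightarrow> 'k set) \<Rightarrow> 'k \<Rightarrow> nat set" where "Db \<beta> t = insert 0 (Lb \<beta> t ` \<beta> t)"
definition preb :: "('k \<Rightarrow> 'k set) \<Rightarrow> 'k \<Rightarrow> nat \<Rightarrow> 'k" where "preb \<beta> t n = the_inv_into (\<beta> t) (Lb \<beta> t) n"
definition fb :: "('k \<Rightarrow> 'k set) \<Rightarrow> 'k \<Rightarrow> 'k \<Rightarrow> nat \<Rightarrow> nat" where
  "fb \<beta> t s n = (if n \<in> Lb \<beta> t ` \<beta> t \<and> preb \<beta> t n \<in> \<beta> s then Lb \<beta> s (preb \<beta> t n) else 0)"
definition leqb :: "('k \<Rightarrow> 'k set) \<Rightarrow> 'k \<Rightarrow> 'k \<Rightarrow> bool" where "leqb \<beta> s t \<longleftrightarrow> \<beta> s \<subseteq> \<beta> t"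

locale constr =
  fixes K :: "'k set" and \<beta> :: "'k \<Rightarrow> 'k set"
  assumes bij: "bij_betw \<beta> K (Fpow K)"
begin

abbreviation "L \<equiv> Lb \<beta>"
abbreviation "D \<equiv> Db \<beta>"
abbreviation "pre \<equiv> preb \<beta>"
abbreviation "fm \<equiv> fb \<beta>"
abbreviation "leq \<equiv> leqb \<beta>"
definition "bi = the_inv_into K \<beta>"

lemma beta_fin: "t \<in> K \<Longrightarrow> finite (\<beta> t)" and beta_sub: "t \<in> K \<Longrightarrow> \<beta> t \<subseteq> K"
  using bij by (auto simp: bij_betw_def Fpow_def)

lemma bi: "finite S \<Longrightarrow> S \<subseteq> K \<Longrightarrow> bi S \<in> K \<and> \<beta> (bi S) = S"
  unfolding bi_def using bij
  by (metis (no_types, lifting) Fpow_def bij_betw_def f_the_inv_into_f mem_Collect_eq the_inv_into_into subset_refl)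

lemma beta_inj: "s \<in> K \<Longrightarrow> t \<in> K \<Longrightarrow> \<beta> s = \<beta> t \<Longrightarrow> s = t"
  using bij by (auto simp: bij_betw_def inj_on_def)

lemma L_inj: "t \<in> K \<Longrightarrow> x \<in> \<beta> t \<Longrightarrow> y \<in> \<beta> t \<Longrightarrow> L t x = L t y \<longleftrightarrow> x = y"
  using lab(1)[OF beta_fin] unfolding Lb_def inj_on_def by blast

lemma L_nz: "t \<in> K \<Longrightarrow> x \<in> \<beta> t \<Longrightarrow> L t x \<noteq> 0"
  using lab(2)[OF beta_fin] unfolding Lb_def by force

lemma pre_L: "t \<in> K \<Longrightarrow> x \<in> \<beta> t \<Longrightarrow> pre t (L t x) = x"
  unfolding preb_def using lab(1)[OF beta_fin] unfolding Lb_def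
  by (simp add: the_inv_into_f_f)

lemma D_cases: "t \<in> K \<Longrightarrow> n \<in> D t \<Longrightarrow> n = 0 \<or> (\<exists>y\<in>\<beta> t. n = L t y)"
  unfolding Db_def by auto

lemma D_fin: "t \<in> K \<Longrightarrow> finite (D t)"
  unfolding Db_def using beta_fin by auto

lemma f_L: "t \<in> K \<Longrightarrow> y \<in> \<beta> t \<Longrightarrow> fm t s (L t y) = (if y \<in> \<beta> s then L s y else 0)"
  unfolding fb_def by (auto simp: pre_L)

lemma f_0: "t \<in> K \<Longrightarrow> fm t s 0 = 0"
  unfolding fb_def using L_nz by fastforce

lemma directed: "directed_poset K leq"
  unfolding directed_poset_def leqb_def
proof (intro conjI ballI impI)
  show "K \<noteq> {}" using bi[of "{}"] by auto
next
  fix s t assume "s \<in> K" "t \<in> K" "\<beta> s \<subseteq> \<beta> t \<and> \<beta> t \<subseteq> \<beta> s"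
  thus "s = t" using beta_inj by blast
next
  fix s t assume st: "s \<in> K" "t \<in> K"
  let ?u = "bi (\<beta> s \<union> \<beta> t)"
  have "?u \<in> K \<and> \<beta> ?u = \<beta> s \<union> \<beta> t" using bi st beta_fin beta_sub by simp
  thus "\<exists>u\<in>K. \<beta> s \<subseteq> \<beta> u \<and> \<beta> t \<subseteq> \<beta> u" by auto
qed auto

lemma diagram: "finite_pointed_diagram K leq D (\<lambda>_. 0) fm"
  unfolding finite_pointed_diagram_def
proof (intro conjI ballI impI)
  fix t assume t: "t \<in> K"
  show "finite (D t)" using D_fin t .
  show "0 \<in> D t" by (simp add: Db_def)
  fix x assume "x \<in> D t"
  then consider "x = 0" | y where "y \<in> \<beta> t" "x = L t y" using D_cases[OF t] by auto
  then show "fm t t x = x" using f_L[OF t] f_0[OF t] by cases auto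
next
  fix s t assume st: "s \<in> K" "t \<in> K" "leq s t"
  show "fm t s 0 = 0" using f_0 st by simp
  fix x assume "x \<in> D t"
  then show "fm t s x \<in> D s" using D_cases[OF st(2)] f_L[OF st(2)] f_0[OF st(2)]
    by (auto simp: Db_def)
next
  fix r s t assume rst: "r \<in> K" "s \<in> K" "t \<in> K" "leq r s \<and> leq s t"
  fix x assume "x \<in> D t"
  then consider "x = 0" | y where "y \<in> \<beta> t" "x = L t y" using D_cases[OF rst(3)] by auto
  then show "fm s r (fm t s x) = fm t r x"
  proof cases
    case 1 then show ?thesis using f_0 rst by simp
  next
    case 2 then show ?thesis using f_L rst f_0 by (auto simp: leqb_def)
  qed
qed

end

lemma fp_single:
  assumes "comm_monoid A" "h a \<in> carrier A"
  shows "finprod A h {n \<in> {a}. h n \<noteq> \<one>\<^bsub>A\<^esub>} = h a"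
proof (cases "h a = \<one>\<^bsub>A\<^esub>")
  case True
  hence "{n \<in> {a}. h n \<noteq> \<one>\<^bsub>A\<^esub>} = {}" by auto
  then show ?thesis using True comm_monoid.finprod_empty[OF assms(1)] by metis
next
  case False
  hence e: "{n \<in> {a}. h n \<noteq> \<one>\<^bsub>A\<^esub>} = {a}" by auto
  have "finprod A h {a} = h a \<otimes>\<^bsub>A\<^esub> finprod A h {}"
    using comm_monoid.finprod_insert[OF assms(1), of "{}" a h] assms by simp
  also have "\<dots> = h a" using comm_monoid.finprod_empty[OF assms(1)] assms(2)
    monoid.r_one[of A] assms(1) comm_monoid.axioms(1) by metis
  finally show ?thesis using e by simp
qed

definition emb :: "('k \<Rightarrow> 'k set) \<Rightarrow> 'k set \<Rightarrow> 'a monoid \<Rightarrow> ('k \<Rightarrow> 'a) \<Rightarrow> 'k \<Rightarrow> nat \<Rightarrow> 'a" where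
  "emb \<beta> K A g = (\<lambda>t\<in>K. \<lambda>n\<in>Db \<beta> t. if n = 0 then \<one>\<^bsub>A\<^esub> else g (preb \<beta> t n))"

definition thr :: "('k \<Rightarrow> 'k set) \<Rightarrow> 'k set \<Rightarrow> 'k \<Rightarrow> 'k \<Rightarrow> nat" where
  "thr \<beta> K y = (\<lambda>t\<in>K. if y \<in> \<beta> t then Lb \<beta> t y else 0)"

locale constr2 = constr K \<beta> + A: comm_group A for K :: "'k set" and \<beta> and A :: "'a monoid"
begin
lemma A: "comm_group A" by (rule A.comm_group_axioms)
lemma canc1: "a \<in> carrier A \<Longrightarrow> b \<in> carrier A \<Longrightarrow> a \<otimes>\<^bsub>A\<^esub> b \<otimes>\<^bsub>A\<^esub> inv\<^bsub>A\<^esub> b = a"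
  by (simp add: A.m_assoc)
lemma canc2: "a \<in> carrier A \<Longrightarrow> b \<in> carrier A \<Longrightarrow> a \<otimes>\<^bsub>A\<^esub> inv\<^bsub>A\<^esub> b \<otimes>\<^bsub>A\<^esub> b = a"
  by (simp add: A.m_assoc)

abbreviation "G \<equiv> lim_smash_group K leq D (\<lambda>_. 0) fm A"
abbreviation "em \<equiv> emb \<beta> K A"
abbreviation "th \<equiv> thr \<beta> K"
abbreviation "P \<equiv> plim K leq D fm"
abbreviation "bp0 \<equiv> plim_bp K (\<lambda>_. (0::nat))"
definition "val a x = a (bi {x}) (L (bi {x}) x)"

lemma Acm: "comm_monoid A" using A by (rule comm_group.axioms(1))
lemma Ag: "group A" using A by (rule comm_group.axioms(2))
lemma oneA: "\<one>\<^bsub>A\<^esub> \<in> carrier A" using group.is_monoid[OF Ag] by (rule monoid.one_closed)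
lemma one1A: "\<one>\<^bsub>A\<^esub> \<otimes>\<^bsub>A\<^esub> \<one>\<^bsub>A\<^esub> = \<one>\<^bsub>A\<^esub>" using monoid.l_one[OF group.is_monoid[OF Ag] oneA] .

lemma bi1: "x \<in> K \<Longrightarrow> bi {x} \<in> K \<and> \<beta> (bi {x}) = {x}" using bi by auto

lemma preimg: assumes "t \<in> K" "s \<in> K" "\<beta> s \<subseteq> \<beta> t" "y \<in> \<beta> s"
  shows "{n \<in> D t. fm t s n = L s y} = {L t y}"
proof -
  have "n = L t y" if "n \<in> D t" "fm t s n = L s y" for n
  proof -
    from D_cases[OF assms(1) that(1)] consider "n = 0" | z where "z \<in> \<beta> t" "n = L t z" by auto
    then show ?thesis
    proof cases
      case 1 then show ?thesis using that f_0 assms L_nz by auto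
    next
      case 2 then show ?thesis using that f_L[OF assms(1)] assms L_nz[OF assms(2) assms(4)] L_inj[OF assms(2)]
        by (auto split: if_splits)
    qed
  qed
  moreover have "L t y \<in> D t" using assms by (auto simp: Db_def)
  moreover have "fm t s (L t y) = L s y" using f_L assms by auto
  ultimately show ?thesis by blast
qed

lemma emb_D: "t \<in> K \<Longrightarrow> y \<in> \<beta> t \<Longrightarrow> em g t (L t y) = g y"
  unfolding emb_def by (auto simp: Db_def L_nz pre_L)

lemma emb_0: "t \<in> K \<Longrightarrow> em g t 0 = \<one>\<^bsub>A\<^esub>"
  unfolding emb_def by (auto simp: Db_def)

lemma emb_in:
  assumes g: "g \<in> K \<rightarrow> carrier A" shows "em g \<in> carrier G"
proof -
  have sm: "em g t \<in> smash (D t) 0 A" if t: "t \<in> K" for t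
  proof -
    have "em g t \<in> D t \<rightarrow>\<^sub>E carrier A"
    proof
      fix n assume "n \<in> D t"
      then consider "n = 0" | y where "y \<in> \<beta> t" "n = L t y" using D_cases[OF t] by auto
      then show "em g t n \<in> carrier A"
      proof cases
        case 1 then show ?thesis using emb_0[OF t] oneA by simp
      next
        case 2 then show ?thesis using emb_D[OF t 2(1)] g beta_sub[OF t] by auto
      qed
    next
      fix n assume "n \<notin> D t" then show "em g t n = undefined" using t by (simp add: emb_def)
    qed
    moreover have "finite {y \<in> D t. em g t y \<noteq> \<one>\<^bsub>A\<^esub>}" using D_fin[OF t] by auto
    ultimately show ?thesis using emb_0[OF t] by (simp add: smash_def)
  qed
  have comp: "smash_map (D t) (D s) 0 (fm t s) A (em g t) = em g s"
    if st: "s \<in> K" "t \<in> K" "leq s t" for s t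
  proof
    fix z
    show "smash_map (D t) (D s) 0 (fm t s) A (em g t) z = em g s z"
    proof (cases "z \<in> D s")
      case False then show ?thesis using st by (simp add: smash_map_def emb_def)
    next
      case True
      then consider "z = 0" | y where "y \<in> \<beta> s" "z = L s y" using D_cases[OF st(1)] by auto
      then show ?thesis
      proof cases
        case 1 then show ?thesis using st True by (simp add: smash_map_def emb_0)
      next
        case 2
        have yt: "y \<in> \<beta> t" using 2 st by (auto simp: leqb_def)
        have "{y' \<in> D t. fm t s y' = z \<and> em g t y' \<noteq> \<one>\<^bsub>A\<^esub>} = {n \<in> {L t y}. em g t n \<noteq> \<one>\<^bsub>A\<^esub>}"
          using preimg[OF st(2) st(1) _ 2(1)] st 2 by (auto simp: leqb_def)
        moreover have "em g t (L t y) \<in> carrier A" using emb_D[OF st(2) yt] g yt beta_sub st by auto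
        ultimately have "finprod A (em g t) {y' \<in> D t. fm t s y' = z \<and> em g t y' \<noteq> \<one>\<^bsub>A\<^esub>} = g y"
          using fp_single[OF Acm, of "em g t" "L t y"] emb_D[OF st(2) yt] by simp
        then show ?thesis using True 2 st L_nz[OF st(1) 2(1)] emb_D[OF st(1) 2(1)] by (simp add: smash_map_def)
      qed
    qed
  qed
  have "em g \<in> (\<Pi>\<^sub>E t\<in>K. smash (D t) 0 A)" using sm by (auto simp: emb_def)
  then show ?thesis using comp by (simp add: lim_smash_group_def)
qed

lemma val_emb: "x \<in> K \<Longrightarrow> val (em g) x = g x"
  unfolding val_def using emb_D bi1 by auto

lemma emb_val:
  assumes a: "a \<in> carrier G"
  shows "em (val a) = a" "val a \<in> K \<rightarrow> carrier A"
proof -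
  have aP: "a \<in> (\<Pi>\<^sub>E t\<in>K. smash (D t) 0 A)"
   and ac: "\<And>s t. s \<in> K \<Longrightarrow> t \<in> K \<Longrightarrow> leq s t \<Longrightarrow> smash_map (D t) (D s) 0 (fm t s) A (a t) = a s"
    using a by (auto simp: lim_smash_group_def)
  have at: "a t \<in> D t \<rightarrow>\<^sub>E carrier A" "a t 0 = \<one>\<^bsub>A\<^esub>" if "t \<in> K" for t
    using aP that by (auto simp: smash_def)
  show vK: "val a \<in> K \<rightarrow> carrier A"
  proof
    fix y assume y: "y \<in> K"
    have "L (bi {y}) y \<in> D (bi {y})" using bi1[OF y] by (auto simp: Db_def)
    then show "val a y \<in> carrier A" unfolding val_def using at(1) bi1[OF y] by auto
  qed
  have key: "a t (L t y) = val a y" if t: "t \<in> K" and y: "y \<in> \<beta> t" for t y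
  proof -
    have yK: "y \<in> K" using y beta_sub t by auto
    define u where "u = bi {y}"
    have u: "u \<in> K" "\<beta> u = {y}" using bi1[OF yK] u_def by auto
    have "smash_map (D t) (D u) 0 (fm t u) A (a t) (L u y) = a u (L u y)"
      using ac[OF u(1) t] u y by (simp add: leqb_def)
    moreover have "L u y \<in> D u" "L u y \<noteq> 0" using u L_nz by (auto simp: Db_def)
    moreover have "{n \<in> D t. fm t u n = L u y \<and> a t n \<noteq> \<one>\<^bsub>A\<^esub>} = {n \<in> {L t y}. a t n \<noteq> \<one>\<^bsub>A\<^esub>}"
      using preimg[OF t u(1) _ ] u y by auto
    moreover have "a t (L t y) \<in> carrier A" using at(1)[OF t] y t by (auto simp: Db_def)
    ultimately show ?thesis using fp_single[OF Acm, of "a t" "L t y"] unfolding val_def u_def[symmetric]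
      by (simp add: smash_map_def)
  qed
  show "em (val a) = a"
  proof
    fix t show "em (val a) t = a t"
    proof (cases "t \<in> K")
      case False then show ?thesis using aP by (auto simp: emb_def)
    next
      case t: True
      show ?thesis
      proof
        fix n show "em (val a) t n = a t n"
        proof (cases "n \<in> D t")
          case False then show ?thesis using at(1)[OF t] t by (auto simp: emb_def)
        next
          case True
          then consider "n = 0" | y where "y \<in> \<beta> t" "n = L t y" using D_cases[OF t] by auto
          then show ?thesis by cases (use emb_0 at t emb_D key in auto)
        qed
      qed
    qed
  qed
qed

lemma carrier_G: "carrier G = em ` (K \<rightarrow> carrier A)"
proof
  show "carrier G \<subseteq> em ` (K \<rightarrow> carrier A)"
  proof
    fix a assume "a \<in> carrier G"
    then show "a \<in> em ` (K \<rightarrow> carrier A)" using emb_val[of a] by (metis image_eqI)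
  qed
  show "em ` (K \<rightarrow> carrier A) \<subseteq> carrier G" using emb_in by blast
qed

lemma emb_cong: "(\<And>x. x \<in> K \<Longrightarrow> g x = h x) \<Longrightarrow> em g = em h"
proof -
  assume gh: "\<And>x. x \<in> K \<Longrightarrow> g x = h x"
  have "g (pre t n) = h (pre t n)" if "t \<in> K" "n \<in> D t" "n \<noteq> 0" for t n
    using D_cases[OF that(1,2)] that pre_L gh beta_sub by fastforce
  then show ?thesis unfolding emb_def by (intro ext) auto
qed

lemma emb_eq_iff: "em g = em h \<longleftrightarrow> (\<forall>x\<in>K. g x = h x)"
  using emb_cong val_emb by metis

lemma emb_mult: "em g \<otimes>\<^bsub>G\<^esub> em h = em (\<lambda>x. g x \<otimes>\<^bsub>A\<^esub> h x)"
  unfolding emb_def using one1A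
  by (auto simp: lim_smash_group_def smash_group_def intro!: ext)


definition "Fin = {g \<in> K \<rightarrow> carrier A. finite {x\<in>K. g x \<noteq> \<one>\<^bsub>A\<^esub>}}"
definition "cls c = em ` {c' \<in> K \<rightarrow> carrier A. finite {x\<in>K. c' x \<noteq> c x}}"
definition "vh h = val (SOME a. a \<in> h)"
abbreviation "R \<equiv> rho K leq D (\<lambda>_. 0) fm A ` smash P bp0 A"
abbreviation "H \<equiv> H_group K leq D (\<lambda>_. 0) fm A"

lemma bp0: "bp0 = (\<lambda>t\<in>K. 0)" by (simp add: plim_bp_def)

lemma thr_at: "t \<in> K \<Longrightarrow> th y t = (if y \<in> \<beta> t then L t y else 0)"
  by (simp add: thr_def)

lemma thr_in: assumes y: "y \<in> K" shows "th y \<in> P"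
proof -
  have "th y \<in> (\<Pi>\<^sub>E t\<in>K. D t)" by (auto simp: thr_def Db_def)
  moreover have "fm t s (th y t) = th y s" if "s \<in> K" "t \<in> K" "leq s t" for s t
    using that f_L f_0 by (auto simp: thr_def leqb_def)
  ultimately show ?thesis by (simp add: plim_def)
qed

lemma bp_in: "bp0 \<in> P"
  unfolding bp0 plim_def using f_0 by (auto simp: Db_def)

lemma thr_uniq:
  assumes x: "x \<in> P" and t: "t \<in> K" and y: "y \<in> \<beta> t" and xt: "x t = L t y"
  shows "x = th y"
proof
  have xP: "x \<in> (\<Pi>\<^sub>E t\<in>K. D t)" and xc: "\<And>s t. s \<in> K \<Longrightarrow> t \<in> K \<Longrightarrow> leq s t \<Longrightarrow> fm t s (x t) = x s"
    using x by (auto simp: plim_def)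
  fix s show "x s = th y s"
  proof (cases "s \<in> K")
    case False then show ?thesis using xP by (auto simp: thr_def)
  next
    case s: True
    define u where "u = bi (\<beta> s \<union> \<beta> t)"
    have u: "u \<in> K" "\<beta> u = \<beta> s \<union> \<beta> t" using bi[of "\<beta> s \<union> \<beta> t"] s t beta_fin beta_sub u_def by auto
    have xD: "x u \<in> D u" using xP u by auto
    have fu: "fm u t (x u) = L t y" using xc[OF t u(1)] u xt by (auto simp: leqb_def)
    have xu: "x u = L u y"
    proof -
      from D_cases[OF u(1) xD] show ?thesis
      proof
        assume "x u = 0" then show ?thesis using fu f_0[OF u(1)] L_nz[OF t y] by simp
      next
        assume "\<exists>z\<in>\<beta> u. x u = L u z"
        then obtain z where z: "z \<in> \<beta> u" "x u = L u z" by blast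
        have "fm u t (L u z) = L t y" using fu z by simp
        then have "z \<in> \<beta> t \<and> L t z = L t y" using f_L[OF u(1) z(1), of t] L_nz[OF t y]
          by (cases "z \<in> \<beta> t") simp_all
        then show ?thesis using z L_inj[OF t] y by blast
      qed
    qed
    have "x s = fm u s (x u)" using xc[OF s u(1)] u by (auto simp: leqb_def)
    also have "\<dots> = th y s" using xu f_L[OF u(1)] u y thr_at[OF s] by auto
    finally show ?thesis .
  qed
qed

lemma thr_eval: "y \<in> K \<Longrightarrow> th y (bi {y}) = L (bi {y}) y \<and> L (bi {y}) y \<noteq> 0"
  using bi1 thr_at L_nz by auto

lemma thr_inj: "inj_on th K"
proof
  fix y y' assume yy: "y \<in> K" "y' \<in> K" "th y = th y'"
  have "th y' (bi {y}) \<noteq> 0" using thr_eval[OF yy(1)] yy(3) by metis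
  then show "y = y'" using thr_at[of "bi {y}" y'] bi1[OF yy(1)] by (auto split: if_splits)
qed

lemma thr_ne: assumes y: "y \<in> K" shows "th y \<noteq> bp0"
proof
  assume "th y = bp0"
  then have "th y (bi {y}) = 0" using bi1[OF y] by (simp add: bp0)
  then show False using thr_eval[OF y] by simp
qed

lemma fiber: "t \<in> K \<Longrightarrow> y \<in> \<beta> t \<Longrightarrow> {x \<in> P. x t = L t y} = {th y}"
proof -
  assume t: "t \<in> K" and y: "y \<in> \<beta> t"
  have "th y \<in> P" using thr_in beta_sub t y by blast
  show ?thesis
  proof
    show "{x \<in> P. x t = L t y} \<subseteq> {th y}" using thr_uniq[OF _ t y] by blast
    show "{th y} \<subseteq> {x \<in> P. x t = L t y}" using \<open>th y \<in> P\<close> thr_at[OF t] y by simp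
  qed
qed

lemma sm_nz: "z \<in> Z \<Longrightarrow> z \<noteq> z0 \<Longrightarrow> smash_map Y Z z0 f A' \<phi> z = finprod A' \<phi> {y \<in> Y. f y = z \<and> \<phi> y \<noteq> \<one>\<^bsub>A'\<^esub>}"
  unfolding smash_map_def by simp
lemma sm_0: "z0 \<in> Z \<Longrightarrow> smash_map Y Z z0 f A' \<phi> z0 = \<one>\<^bsub>A'\<^esub>"
  unfolding smash_map_def by simp
lemma sm_out: "z \<notin> Z \<Longrightarrow> smash_map Y Z z0 f A' \<phi> z = undefined"
  unfolding smash_map_def by simp

lemma rho_at: "t \<in> K \<Longrightarrow> rho K leq D (\<lambda>_. 0) fm A \<psi> t = smash_map P (D t) 0 (\<lambda>x. x t) A \<psi>"
  unfolding rho_def by simp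
lemma rho_out: "t \<notin> K \<Longrightarrow> rho K leq D (\<lambda>_. 0) fm A \<psi> t = undefined"
  unfolding rho_def by simp
lemma emb_out: "t \<notin> K \<Longrightarrow> em g t = undefined"
  unfolding emb_def by simp
lemma emb_out2: "t \<in> K \<Longrightarrow> n \<notin> D t \<Longrightarrow> em g t n = undefined"
  unfolding emb_def by simp

lemma rho_eq:
  assumes psi: "\<psi> \<in> smash P bp0 A"
  shows "rho K leq D (\<lambda>_. 0) fm A \<psi> = em (\<lambda>y. \<psi> (th y))"
proof
  have pP: "\<psi> \<in> P \<rightarrow>\<^sub>E carrier A" using psi unfolding smash_def by simp
  fix t show "rho K leq D (\<lambda>_. 0) fm A \<psi> t = em (\<lambda>y. \<psi> (th y)) t"
  proof (cases "t \<in> K")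
    case False then show ?thesis using rho_out[OF False] emb_out[OF False] by simp
  next
    case t: True
    show ?thesis
    proof
      fix n
      show "rho K leq D (\<lambda>_. 0) fm A \<psi> t n = em (\<lambda>y. \<psi> (th y)) t n"
      proof (cases "n \<in> D t")
        case False then show ?thesis using rho_at[OF t] sm_out[OF False] emb_out2[OF t False] by simp
      next
        case True
        then consider "n = 0" | y where "y \<in> \<beta> t" "n = L t y" using D_cases[OF t] by auto
        then show ?thesis
        proof cases
          case 1 then show ?thesis using rho_at[OF t] sm_0[of 0 "D t"] emb_0[OF t] True by simp
        next
          case 2
          have yK: "y \<in> K" using 2 beta_sub t by auto
          have e: "{x \<in> P. x t = n \<and> \<psi> x \<noteq> \<one>\<^bsub>A\<^esub>} = {x \<in> {th y}. \<psi> x \<noteq> \<one>\<^bsub>A\<^esub>}"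
          proof -
            have "{x \<in> P. x t = n} = {th y}" using fiber[OF t 2(1)] 2(2) by simp
            then show ?thesis by blast
          qed
          have "\<psi> (th y) \<in> carrier A" using pP thr_in[OF yK] by auto
          then have fp: "finprod A \<psi> {x \<in> P. x t = n \<and> \<psi> x \<noteq> \<one>\<^bsub>A\<^esub>} = \<psi> (th y)"
            unfolding e using fp_single[OF Acm, of \<psi> "th y"] by simp
          have "rho K leq D (\<lambda>_. 0) fm A \<psi> t n = finprod A \<psi> {x \<in> P. x t = n \<and> \<psi> x \<noteq> \<one>\<^bsub>A\<^esub>}"
            using rho_at[OF t] sm_nz[of n "D t" 0 P "\<lambda>x. x t" A \<psi>] True L_nz[OF t 2(1)] 2(2) by simp
          also have "\<dots> = em (\<lambda>y. \<psi> (th y)) t n" using fp emb_D[OF t 2(1)] 2(2) by simp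
          finally show ?thesis .
        qed
      qed
    qed
  qed
qed

lemma R_eq: "R = em ` Fin"
proof
  show "R \<subseteq> em ` Fin"
  proof
    fix r assume "r \<in> R"
    then obtain \<psi> where psi: "\<psi> \<in> smash P bp0 A" and r: "r = rho K leq D (\<lambda>_. 0) fm A \<psi>" by auto
    have pP: "\<psi> \<in> P \<rightarrow>\<^sub>E carrier A" and fin: "finite {x \<in> P. \<psi> x \<noteq> \<one>\<^bsub>A\<^esub>}"
      using psi by (auto simp: smash_def)
    have "th ` {y \<in> K. \<psi> (th y) \<noteq> \<one>\<^bsub>A\<^esub>} \<subseteq> {x \<in> P. \<psi> x \<noteq> \<one>\<^bsub>A\<^esub>}" using thr_in by auto
    then have "finite (th ` {y \<in> K. \<psi> (th y) \<noteq> \<one>\<^bsub>A\<^esub>})" using fin finite_subset by blast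
    moreover have "inj_on th {y \<in> K. \<psi> (th y) \<noteq> \<one>\<^bsub>A\<^esub>}"
      by (rule inj_on_subset[OF thr_inj]) auto
    ultimately have "finite {y \<in> K. \<psi> (th y) \<noteq> \<one>\<^bsub>A\<^esub>}" by (rule finite_imageD)
    moreover have "(\<lambda>y. \<psi> (th y)) \<in> K \<rightarrow> carrier A" using pP thr_in by auto
    ultimately show "r \<in> em ` Fin" using r rho_eq[OF psi] by (auto simp: Fin_def)
  qed
next
  show "em ` Fin \<subseteq> R"
  proof
    fix r assume "r \<in> em ` Fin"
    then obtain g where g: "g \<in> K \<rightarrow> carrier A" "finite {x\<in>K. g x \<noteq> \<one>\<^bsub>A\<^esub>}" and r: "r = em g"
      by (auto simp: Fin_def)
    define \<psi> where "\<psi> = (\<lambda>x\<in>P. if x \<in> th ` K then g (inv_into K th x) else \<one>\<^bsub>A\<^esub>)"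
    have ps: "\<psi> (th y) = g y" if "y \<in> K" for y
      using that thr_in[OF that] inv_into_f_f[OF thr_inj that] by (simp add: \<psi>_def)
    have "\<psi> \<in> P \<rightarrow>\<^sub>E carrier A"
    proof
      fix x assume "x \<in> P"
      show "\<psi> x \<in> carrier A"
      proof (cases "x \<in> th ` K")
        case True
        then have "inv_into K th x \<in> K" by (rule inv_into_into)
        then show ?thesis using g(1) True \<open>x \<in> P\<close> by (auto simp: \<psi>_def)
      next
        case False then show ?thesis using oneA \<open>x \<in> P\<close> by (simp add: \<psi>_def)
      qed
    qed (simp add: \<psi>_def)
    moreover have "\<psi> bp0 = \<one>\<^bsub>A\<^esub>"
    proof -
      have "bp0 \<notin> th ` K" using thr_ne by force
      then show ?thesis using bp_in by (simp add: \<psi>_def)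
    qed
    moreover have "{x \<in> P. \<psi> x \<noteq> \<one>\<^bsub>A\<^esub>} \<subseteq> th ` {x\<in>K. g x \<noteq> \<one>\<^bsub>A\<^esub>}"
    proof
      fix x assume x: "x \<in> {x \<in> P. \<psi> x \<noteq> \<one>\<^bsub>A\<^esub>}"
      then have "x \<in> th ` K" by (auto simp: \<psi>_def split: if_splits)
      then obtain y where y: "y \<in> K" "x = th y" by blast
      then show "x \<in> th ` {x\<in>K. g x \<noteq> \<one>\<^bsub>A\<^esub>}" using x ps[OF y(1)] by auto
    qed
    then have "finite {x \<in> P. \<psi> x \<noteq> \<one>\<^bsub>A\<^esub>}" using g(2) finite_subset by blast
    ultimately have psi: "\<psi> \<in> smash P bp0 A" by (simp add: smash_def)
    have "rho K leq D (\<lambda>_. 0) fm A \<psi> = em g" using rho_eq[OF psi] emb_cong[of "\<lambda>y. \<psi> (th y)" g] ps by simp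
    then show "r \<in> R" using psi r by (auto intro!: image_eqI[where x=\<psi>])
  qed
qed

lemma emb_in_cls: "c \<in> K \<rightarrow> carrier A \<Longrightarrow> em c \<in> cls c"
  unfolding cls_def by auto

lemma coset: assumes c: "c \<in> K \<rightarrow> carrier A" shows "R #>\<^bsub>G\<^esub> em c = cls c"
proof
  show "R #>\<^bsub>G\<^esub> em c \<subseteq> cls c"
  proof
    fix a assume "a \<in> R #>\<^bsub>G\<^esub> em c"
    then obtain r where r: "r \<in> Fin" "a = em r \<otimes>\<^bsub>G\<^esub> em c" by (auto simp: r_coset_def R_eq)
    have a: "a = em (\<lambda>x. r x \<otimes>\<^bsub>A\<^esub> c x)" using r emb_mult by simp
    have rK: "(\<lambda>x. r x \<otimes>\<^bsub>A\<^esub> c x) \<in> K \<rightarrow> carrier A" using r(1) c by (auto simp: Fin_def)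
    have sub: "{x\<in>K. r x \<otimes>\<^bsub>A\<^esub> c x \<noteq> c x} \<subseteq> {x\<in>K. r x \<noteq> \<one>\<^bsub>A\<^esub>}" using c by (auto simp: Pi_iff)
    have "finite {x\<in>K. r x \<noteq> \<one>\<^bsub>A\<^esub>}" using r(1) by (simp add: Fin_def)
    then have "finite {x\<in>K. r x \<otimes>\<^bsub>A\<^esub> c x \<noteq> c x}" using sub finite_subset by blast
    with rK show "a \<in> cls c" using a by (auto simp: cls_def)
  qed
next
  show "cls c \<subseteq> R #>\<^bsub>G\<^esub> em c"
  proof
    fix a assume "a \<in> cls c"
    then obtain c' where c': "c' \<in> K \<rightarrow> carrier A" "finite {x\<in>K. c' x \<noteq> c x}" "a = em c'"
      by (auto simp: cls_def)
    define r where "r = (\<lambda>x. c' x \<otimes>\<^bsub>A\<^esub> inv\<^bsub>A\<^esub> c x)"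
    have rK: "r \<in> K \<rightarrow> carrier A" using c c' by (auto simp: r_def)
    have "{x\<in>K. r x \<noteq> \<one>\<^bsub>A\<^esub>} \<subseteq> {x\<in>K. c' x \<noteq> c x}" using c by (auto simp: r_def Pi_iff)
    then have "r \<in> Fin" using rK c'(2) finite_subset by (auto simp: Fin_def)
    moreover have "em r \<otimes>\<^bsub>G\<^esub> em c = a"
    proof -
      have "em r \<otimes>\<^bsub>G\<^esub> em c = em (\<lambda>x. r x \<otimes>\<^bsub>A\<^esub> c x)" by (rule emb_mult)
      also have "\<dots> = em c'"
        by (rule emb_cong) (use c c' canc2 in \<open>auto simp: r_def\<close>)
      finally show ?thesis using c' by simp
    qed
    ultimately show "a \<in> R #>\<^bsub>G\<^esub> em c" by (auto simp: r_coset_def R_eq)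
  qed
qed

lemma carrier_H: "carrier H = cls ` (K \<rightarrow> carrier A)"
proof -
  have "carrier H = (\<Union>a\<in>carrier G. {R #>\<^bsub>G\<^esub> a})"
    by (simp add: H_group_def FactGroup_def RCOSETS_def)
  also have "\<dots> = (\<Union>c\<in>K \<rightarrow> carrier A. {R #>\<^bsub>G\<^esub> em c})" by (simp add: carrier_G)
  also have "\<dots> = cls ` (K \<rightarrow> carrier A)" using coset by auto
  finally show ?thesis .
qed

lemma mult_H: "h \<otimes>\<^bsub>H\<^esub> h' = h <#>\<^bsub>G\<^esub> h'"
  by (simp add: H_group_def FactGroup_def)

lemma cls_eqI:
  assumes "finite {x\<in>K. c x \<noteq> c' x}" shows "cls c = cls c'"
proof -
  have "finite {x\<in>K. d x \<noteq> c x} \<longleftrightarrow> finite {x\<in>K. d x \<noteq> c' x}" for d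
  proof
    assume "finite {x\<in>K. d x \<noteq> c x}"
    moreover have "{x\<in>K. d x \<noteq> c' x} \<subseteq> {x\<in>K. d x \<noteq> c x} \<union> {x\<in>K. c x \<noteq> c' x}" by auto
    ultimately show "finite {x\<in>K. d x \<noteq> c' x}" using assms finite_subset by blast
  next
    assume "finite {x\<in>K. d x \<noteq> c' x}"
    moreover have "{x\<in>K. d x \<noteq> c x} \<subseteq> {x\<in>K. d x \<noteq> c' x} \<union> {x\<in>K. c x \<noteq> c' x}" by auto
    ultimately show "finite {x\<in>K. d x \<noteq> c x}" using assms finite_subset by blast
  qed
  then show ?thesis unfolding cls_def by simp
qed

lemma cls_eqD:
  assumes c: "c \<in> K \<rightarrow> carrier A" and e: "cls c = cls c'" shows "finite {x\<in>K. c x \<noteq> c' x}"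
proof -
  have "em c \<in> cls c'" using emb_in_cls[OF c] e by simp
  then obtain c'' where c'': "finite {x\<in>K. c'' x \<noteq> c' x}" "em c = em c''" by (auto simp: cls_def)
  then have "{x\<in>K. c x \<noteq> c' x} = {x\<in>K. c'' x \<noteq> c' x}" using emb_eq_iff by auto
  then show ?thesis using c'' by simp
qed

lemma vh:
  assumes c: "c \<in> K \<rightarrow> carrier A"
  shows "vh (cls c) \<in> K \<rightarrow> carrier A" "finite {x\<in>K. vh (cls c) x \<noteq> c x}"
proof -
  have "(SOME a. a \<in> cls c) \<in> cls c" using emb_in_cls[OF c] by (rule someI[where P="\<lambda>a. a \<in> cls c"])
  then obtain c'' where c'': "c'' \<in> K \<rightarrow> carrier A" "finite {x\<in>K. c'' x \<noteq> c x}" "(SOME a. a \<in> cls c) = em c''"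
    by (auto simp: cls_def)
  have v: "x \<in> K \<Longrightarrow> vh (cls c) x = c'' x" for x using c''(3) val_emb by (simp add: vh_def)
  show "vh (cls c) \<in> K \<rightarrow> carrier A" using v c''(1) by auto
  have "{x\<in>K. vh (cls c) x \<noteq> c x} = {x\<in>K. c'' x \<noteq> c x}" using v by auto
  then show "finite {x\<in>K. vh (cls c) x \<noteq> c x}" using c''(2) by simp
qed

lemma cls_mult:
  assumes c: "c \<in> K \<rightarrow> carrier A" and d: "d \<in> K \<rightarrow> carrier A"
  shows "cls c <#>\<^bsub>G\<^esub> cls d = cls (\<lambda>x. c x \<otimes>\<^bsub>A\<^esub> d x)"
proof
  show "cls c <#>\<^bsub>G\<^esub> cls d \<subseteq> cls (\<lambda>x. c x \<otimes>\<^bsub>A\<^esub> d x)"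
  proof
    fix a assume "a \<in> cls c <#>\<^bsub>G\<^esub> cls d"
    then obtain c' d' where c': "c' \<in> K \<rightarrow> carrier A" "finite {x\<in>K. c' x \<noteq> c x}"
      and d': "d' \<in> K \<rightarrow> carrier A" "finite {x\<in>K. d' x \<noteq> d x}" and a: "a = em c' \<otimes>\<^bsub>G\<^esub> em d'"
      by (auto simp: set_mult_def cls_def)
    have "{x\<in>K. c' x \<otimes>\<^bsub>A\<^esub> d' x \<noteq> c x \<otimes>\<^bsub>A\<^esub> d x} \<subseteq> {x\<in>K. c' x \<noteq> c x} \<union> {x\<in>K. d' x \<noteq> d x}" by auto
    then have "finite {x\<in>K. c' x \<otimes>\<^bsub>A\<^esub> d' x \<noteq> c x \<otimes>\<^bsub>A\<^esub> d x}" using c'(2) d'(2) finite_subset by blast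
    moreover have "(\<lambda>x. c' x \<otimes>\<^bsub>A\<^esub> d' x) \<in> K \<rightarrow> carrier A" using c' d' by auto
    ultimately show "a \<in> cls (\<lambda>x. c x \<otimes>\<^bsub>A\<^esub> d x)" using a emb_mult by (auto simp: cls_def)
  qed
next
  show "cls (\<lambda>x. c x \<otimes>\<^bsub>A\<^esub> d x) \<subseteq> cls c <#>\<^bsub>G\<^esub> cls d"
  proof
    fix a assume "a \<in> cls (\<lambda>x. c x \<otimes>\<^bsub>A\<^esub> d x)"
    then obtain e where e: "e \<in> K \<rightarrow> carrier A" "finite {x\<in>K. e x \<noteq> c x \<otimes>\<^bsub>A\<^esub> d x}" "a = em e"
      by (auto simp: cls_def)
    define c' where "c' = (\<lambda>x. e x \<otimes>\<^bsub>A\<^esub> inv\<^bsub>A\<^esub> d x)"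
    have c'K: "c' \<in> K \<rightarrow> carrier A" using e d by (auto simp: c'_def)
    have "{x\<in>K. c' x \<noteq> c x} \<subseteq> {x\<in>K. e x \<noteq> c x \<otimes>\<^bsub>A\<^esub> d x}"
      using c d canc1 by (auto simp: c'_def Pi_iff)
    then have "finite {x\<in>K. c' x \<noteq> c x}" using e(2) finite_subset by blast
    then have "em c' \<in> cls c" using c'K by (auto simp: cls_def)
    moreover have "em d \<in> cls d" using emb_in_cls[OF d] .
    moreover have "em c' \<otimes>\<^bsub>G\<^esub> em d = a"
    proof -
      have "em c' \<otimes>\<^bsub>G\<^esub> em d = em (\<lambda>x. c' x \<otimes>\<^bsub>A\<^esub> d x)" by (rule emb_mult)
      also have "\<dots> = em e" by (rule emb_cong) (use e d canc2 in \<open>auto simp: c'_def\<close>)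
      finally show ?thesis using e by simp
    qed
    ultimately show "a \<in> cls c <#>\<^bsub>G\<^esub> cls d" unfolding set_mult_def by blast
  qed
qed

end

lemma comm_group_image:
  fixes G (structure) and M (structure)
  assumes G: "comm_group G" and pc: "\<pi> \<in> carrier G \<rightarrow> carrier M"
    and ps: "carrier M \<subseteq> \<pi> ` carrier G"
    and pm: "\<And>x y. x \<in> carrier G \<Longrightarrow> y \<in> carrier G \<Longrightarrow> \<pi> (x \<otimes>\<^bsub>G\<^esub> y) = \<pi> x \<otimes>\<^bsub>M\<^esub> \<pi> y"
    and p1: "\<pi> \<one>\<^bsub>G\<^esub> = \<one>\<^bsub>M\<^esub>"
  shows "comm_group M"
proof -
  interpret G: comm_group G by (rule G)
  have pre: "\<exists>x'\<in>carrier G. x = \<pi> x'" if "x \<in> carrier M" for x using ps that by blast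
  show ?thesis
  proof (rule comm_groupI)
    fix x y assume "x \<in> carrier M" "y \<in> carrier M"
    then obtain x' y' where xy: "x' \<in> carrier G" "y' \<in> carrier G" "x = \<pi> x'" "y = \<pi> y'" using pre by blast
    have "x \<otimes>\<^bsub>M\<^esub> y = \<pi> (x' \<otimes>\<^bsub>G\<^esub> y')" using pm[OF xy(1,2)] xy(3,4) by simp
    moreover have "\<pi> (x' \<otimes>\<^bsub>G\<^esub> y') \<in> carrier M" using funcset_mem[OF pc G.m_closed[OF xy(1,2)]] .
    ultimately show "x \<otimes>\<^bsub>M\<^esub> y \<in> carrier M" by simp
  next
    show "\<one>\<^bsub>M\<^esub> \<in> carrier M" using funcset_mem[OF pc G.one_closed] p1 by simp
  next
    fix x y z assume xm: "x \<in> carrier M" and ym: "y \<in> carrier M" and zm: "z \<in> carrier M"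
    obtain x' where x: "x' \<in> carrier G" "x = \<pi> x'" using pre[OF xm] by blast
    obtain y' where y: "y' \<in> carrier G" "y = \<pi> y'" using pre[OF ym] by blast
    obtain z' where z: "z' \<in> carrier G" "z = \<pi> z'" using pre[OF zm] by blast
    have "x \<otimes>\<^bsub>M\<^esub> y \<otimes>\<^bsub>M\<^esub> z = \<pi> (x' \<otimes>\<^bsub>G\<^esub> y' \<otimes>\<^bsub>G\<^esub> z')"
      using pm[OF G.m_closed[OF x(1) y(1)] z(1)] pm[OF x(1) y(1)] x y z by simp
    also have "\<dots> = \<pi> (x' \<otimes>\<^bsub>G\<^esub> (y' \<otimes>\<^bsub>G\<^esub> z'))" using G.m_assoc[OF x(1) y(1) z(1)] by simp
    also have "\<dots> = x \<otimes>\<^bsub>M\<^esub> (y \<otimes>\<^bsub>M\<^esub> z)"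
      using pm[OF x(1) G.m_closed[OF y(1) z(1)]] pm[OF y(1) z(1)] x y z by simp
    finally show "x \<otimes>\<^bsub>M\<^esub> y \<otimes>\<^bsub>M\<^esub> z = x \<otimes>\<^bsub>M\<^esub> (y \<otimes>\<^bsub>M\<^esub> z)" .
  next
    fix x y assume xm: "x \<in> carrier M" and ym: "y \<in> carrier M"
    obtain x' where x: "x' \<in> carrier G" "x = \<pi> x'" using pre[OF xm] by blast
    obtain y' where y: "y' \<in> carrier G" "y = \<pi> y'" using pre[OF ym] by blast
    have "x \<otimes>\<^bsub>M\<^esub> y = \<pi> (x' \<otimes>\<^bsub>G\<^esub> y')" using pm[OF x(1) y(1)] x y by simp
    also have "\<dots> = \<pi> (y' \<otimes>\<^bsub>G\<^esub> x')" using G.m_comm[OF x(1) y(1)] by simp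
    also have "\<dots> = y \<otimes>\<^bsub>M\<^esub> x" using pm[OF y(1) x(1)] x y by simp
    finally show "x \<otimes>\<^bsub>M\<^esub> y = y \<otimes>\<^bsub>M\<^esub> x" .
  next
    fix x assume xm: "x \<in> carrier M"
    obtain x' where x: "x' \<in> carrier G" "x = \<pi> x'" using pre[OF xm] by blast
    show "\<one>\<^bsub>M\<^esub> \<otimes>\<^bsub>M\<^esub> x = x" using pm[OF G.one_closed x(1)] p1 x by simp
  next
    fix x assume xm: "x \<in> carrier M"
    obtain x' where x: "x' \<in> carrier G" "x = \<pi> x'" using pre[OF xm] by blast
    have ic: "inv\<^bsub>G\<^esub> x' \<in> carrier G" using x(1) by simp
    have "\<pi> (inv\<^bsub>G\<^esub> x') \<in> carrier M" using funcset_mem[OF pc ic] .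
    moreover have "\<pi> (inv\<^bsub>G\<^esub> x') \<otimes>\<^bsub>M\<^esub> x = \<one>\<^bsub>M\<^esub>"
      using pm[OF ic x(1)] G.l_inv[OF x(1)] x p1 by simp
    ultimately show "\<exists>y\<in>carrier M. y \<otimes>\<^bsub>M\<^esub> x = \<one>\<^bsub>M\<^esub>" by blast
  qed
qed

lemma Q_mult: "x \<otimes>\<^bsub>Qgroup\<^esub> y = x + y" and Q_carrier: "carrier Qgroup = UNIV"
  by (simp_all add: Qgroup_def)

locale constr3 = constr2 K \<beta> A + E: comm_group E
  for K :: "'k set" and \<beta> and A :: "'a monoid" and E :: "('a \<times> rat) monoid" +
  assumes Ec: "carrier E = carrier A \<times> UNIV"
    and incl: "(\<lambda>c. (c, 0::rat)) \<in> hom A E"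
    and sndh: "snd \<in> hom E Qgroup"
begin

definition "op p q a b = fst ((a, p) \<otimes>\<^bsub>E\<^esub> (b, q))"

lemma snd_mult: "x \<in> carrier E \<Longrightarrow> y \<in> carrier E \<Longrightarrow> snd (x \<otimes>\<^bsub>E\<^esub> y) = snd x + snd y"
  using sndh unfolding hom_def Q_mult by blast
definition "ia p a = fst (inv\<^bsub>E\<^esub> (a, p))"

lemma E_mult: assumes "a \<in> carrier A" "b \<in> carrier A"
  shows "(a, p) \<otimes>\<^bsub>E\<^esub> (b, q) = (op p q a b, p + q)" "op p q a b \<in> carrier A"
proof -
  have ab: "(a, p) \<in> carrier E" "(b, q) \<in> carrier E" using assms Ec by auto
  have "snd ((a, p) \<otimes>\<^bsub>E\<^esub> (b, q)) = p + q" using snd_mult[OF ab] by simp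
  moreover have "(a, p) \<otimes>\<^bsub>E\<^esub> (b, q) \<in> carrier E" using ab by simp
  ultimately show "(a, p) \<otimes>\<^bsub>E\<^esub> (b, q) = (op p q a b, p + q)" "op p q a b \<in> carrier A"
    using Ec by (auto simp: op_def prod_eq_iff)
qed

lemma incl_mult: "a \<in> carrier A \<Longrightarrow> b \<in> carrier A \<Longrightarrow> (a, 0) \<otimes>\<^bsub>E\<^esub> (b, 0) = (a \<otimes>\<^bsub>A\<^esub> b, 0::rat)"
  using incl by (simp add: hom_def)

lemma op00: "a \<in> carrier A \<Longrightarrow> b \<in> carrier A \<Longrightarrow> op 0 0 a b = a \<otimes>\<^bsub>A\<^esub> b"
  using incl_mult E_mult(1)[of a b 0 0] by simp

lemma E_one: "\<one>\<^bsub>E\<^esub> = (\<one>\<^bsub>A\<^esub>, 0)"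
proof -
  have c: "(\<one>\<^bsub>A\<^esub>, 0::rat) \<in> carrier E" using Ec by simp
  have "(\<one>\<^bsub>A\<^esub>, 0::rat) \<otimes>\<^bsub>E\<^esub> (\<one>\<^bsub>A\<^esub>, 0) = (\<one>\<^bsub>A\<^esub>, 0)" using incl_mult[of "\<one>\<^bsub>A\<^esub>" "\<one>\<^bsub>A\<^esub>"] by simp
  then show ?thesis using E.l_cancel_one[OF c c] by simp
qed

lemma op_assoc: assumes "a \<in> carrier A" "b \<in> carrier A" "c \<in> carrier A"
  shows "op (p+q) r (op p q a b) c = op p (q+r) a (op q r b c)"
proof -
  have "((a,p) \<otimes>\<^bsub>E\<^esub> (b,q)) \<otimes>\<^bsub>E\<^esub> (c,r) = (a,p) \<otimes>\<^bsub>E\<^esub> ((b,q) \<otimes>\<^bsub>E\<^esub> (c,r))"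
    using assms Ec by (intro E.m_assoc) auto
  then show ?thesis using E_mult assms by simp
qed

lemma op_comm: assumes "a \<in> carrier A" "b \<in> carrier A" shows "op p q a b = op q p b a"
proof -
  have "(a,p) \<otimes>\<^bsub>E\<^esub> (b,q) = (b,q) \<otimes>\<^bsub>E\<^esub> (a,p)" using assms Ec by (intro E.m_comm) auto
  then show ?thesis by (simp add: op_def)
qed

lemma op_one: assumes "b \<in> carrier A" shows "op 0 q \<one>\<^bsub>A\<^esub> b = b"
proof -
  have "\<one>\<^bsub>E\<^esub> \<otimes>\<^bsub>E\<^esub> (b,q) = (b,q)" using assms Ec by (intro E.l_one) auto
  then show ?thesis using E_one by (simp add: op_def)
qed

lemma E_inv: assumes "a \<in> carrier A"
  shows "ia p a \<in> carrier A" "op (-p) p (ia p a) a = \<one>\<^bsub>A\<^esub>"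
proof -
  have c: "(a,p) \<in> carrier E" using assms Ec by auto
  have ic: "inv\<^bsub>E\<^esub> (a,p) \<in> carrier E" using c by simp
  have l: "inv\<^bsub>E\<^esub> (a,p) \<otimes>\<^bsub>E\<^esub> (a,p) = \<one>\<^bsub>E\<^esub>" using c by simp
  have "snd (inv\<^bsub>E\<^esub> (a,p) \<otimes>\<^bsub>E\<^esub> (a,p)) = snd (inv\<^bsub>E\<^esub> (a,p)) + p" using snd_mult[OF ic c] by simp
  then have s: "snd (inv\<^bsub>E\<^esub> (a,p)) = -p" using l E_one by simp
  have i: "inv\<^bsub>E\<^esub> (a,p) = (ia p a, -p)" using s by (simp add: ia_def prod_eq_iff)
  show "ia p a \<in> carrier A" using ic Ec i by auto
  show "op (-p) p (ia p a) a = \<one>\<^bsub>A\<^esub>" using l i E_one by (simp add: op_def)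
qed

definition G' :: "(('k \<Rightarrow> 'a) \<times> rat) monoid" where
  "G' = \<lparr>carrier = (K \<rightarrow>\<^sub>E carrier A) \<times> UNIV,
    monoid.mult = (\<lambda>u v. (\<lambda>x\<in>K. op (snd u) (snd v) (fst u x) (fst v x), snd u + snd v)),
    monoid.one = (\<lambda>x\<in>K. \<one>\<^bsub>A\<^esub>, 0)\<rparr>"

lemma G'_mult: "(c, p) \<otimes>\<^bsub>G'\<^esub> (d, q) = (\<lambda>x\<in>K. op p q (c x) (d x), p + q)"
  by (simp add: G'_def)

lemma G'_group: "comm_group G'"
proof (rule comm_groupI)
  fix u v assume "u \<in> carrier G'" "v \<in> carrier G'"
  then obtain c p d q where u: "u = (c,p)" "v = (d,q)"
    and c: "c \<in> K \<rightarrow>\<^sub>E carrier A" "d \<in> K \<rightarrow>\<^sub>E carrier A"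
    by (auto simp: G'_def)
  have "(\<lambda>x\<in>K. op p q (c x) (d x)) \<in> K \<rightarrow>\<^sub>E carrier A"
  proof
    fix x assume x: "x \<in> K"
    then show "(\<lambda>x\<in>K. op p q (c x) (d x)) x \<in> carrier A"
      using E_mult(2)[OF PiE_mem[OF c(1) x] PiE_mem[OF c(2) x]] by simp
  qed simp
  then show "u \<otimes>\<^bsub>G'\<^esub> v \<in> carrier G'" using u by (simp add: G'_mult) (simp add: G'_def)
next
  show "\<one>\<^bsub>G'\<^esub> \<in> carrier G'" using oneA by (auto simp: G'_def)
next
  fix u v w assume "u \<in> carrier G'" "v \<in> carrier G'" "w \<in> carrier G'"
  then obtain c p d q e r where u: "u = (c,p)" "v = (d,q)" "w = (e,r)"
    and c: "c \<in> K \<rightarrow>\<^sub>E carrier A" "d \<in> K \<rightarrow>\<^sub>E carrier A" "e \<in> K \<rightarrow>\<^sub>E carrier A"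
    by (auto simp: G'_def)
  have "(\<lambda>x\<in>K. op (p+q) r (op p q (c x) (d x)) (e x)) = (\<lambda>x\<in>K. op p (q+r) (c x) (op q r (d x) (e x)))"
    using c op_assoc by (auto simp: PiE_iff intro!: ext)
  then show "u \<otimes>\<^bsub>G'\<^esub> v \<otimes>\<^bsub>G'\<^esub> w = u \<otimes>\<^bsub>G'\<^esub> (v \<otimes>\<^bsub>G'\<^esub> w)"
    using u by (simp add: G'_mult add.assoc cong: restrict_cong)
next
  fix u v assume "u \<in> carrier G'" "v \<in> carrier G'"
  then obtain c p d q where u: "u = (c,p)" "v = (d,q)"
    and c: "c \<in> K \<rightarrow>\<^sub>E carrier A" "d \<in> K \<rightarrow>\<^sub>E carrier A"
    by (auto simp: G'_def)
  have "(\<lambda>x\<in>K. op p q (c x) (d x)) = (\<lambda>x\<in>K. op q p (d x) (c x))"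
    using c op_comm by (auto simp: PiE_iff intro!: ext)
  then show "u \<otimes>\<^bsub>G'\<^esub> v = v \<otimes>\<^bsub>G'\<^esub> u" using u by (simp add: G'_mult add.commute)
next
  fix u assume "u \<in> carrier G'"
  then obtain c p where u: "u = (c,p)" and c: "c \<in> K \<rightarrow>\<^sub>E carrier A" by (auto simp: G'_def)
  have "(\<lambda>x\<in>K. op 0 p \<one>\<^bsub>A\<^esub> (c x)) = c"
    using c op_one by (auto simp: PiE_iff extensional_def intro!: ext)
  moreover have "\<one>\<^bsub>G'\<^esub> = (\<lambda>x\<in>K. \<one>\<^bsub>A\<^esub>, 0)" by (simp add: G'_def)
  ultimately show "\<one>\<^bsub>G'\<^esub> \<otimes>\<^bsub>G'\<^esub> u = u" using u by (simp add: G'_mult cong: restrict_cong)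
next
  fix u assume "u \<in> carrier G'"
  then obtain c p where u: "u = (c,p)" and c: "c \<in> K \<rightarrow>\<^sub>E carrier A" by (auto simp: G'_def)
  define v where "v = ((\<lambda>x\<in>K. ia p (c x)), -p)"
  have "v \<in> carrier G'" using c E_inv(1) by (auto simp: G'_def v_def)
  moreover have "v \<otimes>\<^bsub>G'\<^esub> u = \<one>\<^bsub>G'\<^esub>"
  proof -
    have "(\<lambda>x\<in>K. op (-p) p ((\<lambda>x\<in>K. ia p (c x)) x) (c x)) = (\<lambda>x\<in>K. \<one>\<^bsub>A\<^esub>)"
      using c E_inv(2) by (auto simp: PiE_iff intro!: ext)
    then show ?thesis using u by (simp add: v_def G'_mult G'_def)
  qed
  ultimately show "\<exists>v\<in>carrier G'. v \<otimes>\<^bsub>G'\<^esub> u = \<one>\<^bsub>G'\<^esub>" by blast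
qed

definition EH :: "(('k \<Rightarrow> nat \<Rightarrow> 'a) set \<times> rat) monoid" where
  "EH = \<lparr>carrier = carrier H \<times> UNIV,
    monoid.mult = (\<lambda>u v. (cls (\<lambda>x. op (snd u) (snd v) (vh (fst u) x) (vh (fst v) x)), snd u + snd v)),
    monoid.one = (cls (\<lambda>x. \<one>\<^bsub>A\<^esub>), 0)\<rparr>"

lemma EH_mult: "(h, p) \<otimes>\<^bsub>EH\<^esub> (h', q) = (cls (\<lambda>x. op p q (vh h x) (vh h' x)), p + q)"
  by (simp add: EH_def)

lemma cls_restrict: "cls (restrict c K) = cls c"
  by (rule cls_eqI) simp

lemma cls_op:
  assumes c: "c \<in> K \<rightarrow> carrier A" and d: "d \<in> K \<rightarrow> carrier A"
  shows "cls (\<lambda>x. op p q (vh (cls c) x) (vh (cls d) x)) = cls (\<lambda>x. op p q (c x) (d x))"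
proof (rule cls_eqI)
  have "{x\<in>K. op p q (vh (cls c) x) (vh (cls d) x) \<noteq> op p q (c x) (d x)}
      \<subseteq> {x\<in>K. vh (cls c) x \<noteq> c x} \<union> {x\<in>K. vh (cls d) x \<noteq> d x}" by auto
  then show "finite {x\<in>K. op p q (vh (cls c) x) (vh (cls d) x) \<noteq> op p q (c x) (d x)}"
    using vh(2)[OF c] vh(2)[OF d] finite_subset by blast
qed

lemma EH_group: "comm_group EH"
proof (rule comm_group_image[OF G'_group, where \<pi>="\<lambda>u. (cls (fst u), snd u)"])
  show "(\<lambda>u. (cls (fst u), snd u)) \<in> carrier G' \<rightarrow> carrier EH"
    by (auto simp: G'_def EH_def carrier_H PiE_def)
  show "carrier EH \<subseteq> (\<lambda>u. (cls (fst u), snd u)) ` carrier G'"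
  proof
    fix z assume "z \<in> carrier EH"
    then obtain c p where c: "c \<in> K \<rightarrow> carrier A" "z = (cls c, p)" by (auto simp: EH_def carrier_H)
    have "(restrict c K, p) \<in> carrier G'" using c by (auto simp: G'_def)
    moreover have "z = (cls (fst (restrict c K, p)), snd (restrict c K, p))" using c cls_restrict by simp
    ultimately show "z \<in> (\<lambda>u. (cls (fst u), snd u)) ` carrier G'" by blast
  qed
  fix u v assume "u \<in> carrier G'" "v \<in> carrier G'"
  then obtain c p d q where u: "u = (c,p)" "v = (d,q)"
    and c: "c \<in> K \<rightarrow>\<^sub>E carrier A" "d \<in> K \<rightarrow>\<^sub>E carrier A"
    by (auto simp: G'_def)
  have c': "c \<in> K \<rightarrow> carrier A" "d \<in> K \<rightarrow> carrier A" using c by auto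
  show "(cls (fst (u \<otimes>\<^bsub>G'\<^esub> v)), snd (u \<otimes>\<^bsub>G'\<^esub> v)) = (cls (fst u), snd u) \<otimes>\<^bsub>EH\<^esub> (cls (fst v), snd v)"
    using u cls_op[OF c'] cls_restrict by (simp add: G'_mult EH_mult)
next
  show "(cls (fst \<one>\<^bsub>G'\<^esub>), snd \<one>\<^bsub>G'\<^esub>) = \<one>\<^bsub>EH\<^esub>"
    using cls_restrict[of "\<lambda>x. \<one>\<^bsub>A\<^esub>"] by (simp add: G'_def EH_def)
qed

lemma EH_incl: "(\<lambda>h. (h, 0::rat)) \<in> hom H EH"
proof (rule homI)
  fix h assume "h \<in> carrier H" then show "(h, 0::rat) \<in> carrier EH" by (simp add: EH_def)
next
  fix h h' assume "h \<in> carrier H" "h' \<in> carrier H"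
  then obtain c d where c: "c \<in> K \<rightarrow> carrier A" "d \<in> K \<rightarrow> carrier A" "h = cls c" "h' = cls d"
    by (auto simp: carrier_H)
  have "h \<otimes>\<^bsub>H\<^esub> h' = cls (\<lambda>x. c x \<otimes>\<^bsub>A\<^esub> d x)" using c by (simp add: mult_H cls_mult)
  also have "\<dots> = cls (\<lambda>x. op 0 0 (c x) (d x))"
  proof (rule cls_eqI)
    have e: "{x\<in>K. c x \<otimes>\<^bsub>A\<^esub> d x \<noteq> op 0 0 (c x) (d x)} = {}" using c by (auto simp: Pi_iff op00)
    show "finite {x\<in>K. c x \<otimes>\<^bsub>A\<^esub> d x \<noteq> op 0 0 (c x) (d x)}" unfolding e by simp
  qed
  also have "\<dots> = cls (\<lambda>x. op 0 0 (vh h x) (vh h' x))" using cls_op[OF c(1,2)] c by simp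
  finally show "(h \<otimes>\<^bsub>H\<^esub> h', 0::rat) = (h, 0) \<otimes>\<^bsub>EH\<^esub> (h', 0)" by (simp add: EH_mult)
qed

lemma EH_snd: "snd \<in> hom EH Qgroup"
  by (rule homI) (auto simp: EH_def Q_mult Q_carrier)

lemma no_section:
  assumes unc: "uncountable K"
    and nosec: "\<not> (\<exists>s\<in>hom Qgroup E. \<forall>q. snd (s q) = q)"
  shows "\<not> (\<exists>s\<in>hom Qgroup EH. \<forall>q. snd (s q) = q)"
proof
  assume "\<exists>s\<in>hom Qgroup EH. \<forall>q. snd (s q) = q"
  then obtain s where s: "s \<in> hom Qgroup EH" "\<And>q. snd (s q) = q" by blast
  define w where "w q = vh (fst (s q))" for q
  have sq: "fst (s q) = cls (w q) \<and> w q \<in> K \<rightarrow> carrier A" for q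
  proof -
    have "s q \<in> carrier EH" using s(1) by (auto simp: hom_def Q_carrier)
    then obtain c where c: "c \<in> K \<rightarrow> carrier A" "fst (s q) = cls c" by (auto simp: EH_def carrier_H)
    have "cls (w q) = cls c" using vh[OF c(1)] c(2) by (simp add: w_def cls_eqI)
    then show ?thesis using c vh[OF c(1)] by (simp add: w_def)
  qed
  have s_eq: "s q = (cls (w q), q)" for q using sq[of q] s(2)[of q] by (simp add: prod_eq_iff)
  define B where "B q q' = {x\<in>K. w (q+q') x \<noteq> op q q' (w q x) (w q' x)}" for q q'
  have finB: "finite (B q q')" for q q'
  proof -
    have "s (q + q') = s q \<otimes>\<^bsub>EH\<^esub> s q'" using s(1) by (simp add: hom_def Q_mult Q_carrier)
    then have "cls (w (q+q')) = cls (\<lambda>x. op q q' (vh (cls (w q)) x) (vh (cls (w q')) x))"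
      by (simp add: s_eq EH_mult)
    also have "\<dots> = cls (\<lambda>x. op q q' (w q x) (w q' x))" using cls_op sq by simp
    finally show ?thesis unfolding B_def using cls_eqD sq by blast
  qed
  have "countable (\<Union>pq\<in>(UNIV :: (rat \<times> rat) set). B (fst pq) (snd pq))"
    using finB by (intro countable_UN) (auto intro: countable_finite)
  then have "\<not> K \<subseteq> (\<Union>pq\<in>(UNIV :: (rat \<times> rat) set). B (fst pq) (snd pq))"
    using unc countable_subset by blast
  then obtain x0 where x0K: "x0 \<in> K" and x0n: "x0 \<notin> (\<Union>pq\<in>(UNIV :: (rat \<times> rat) set). B (fst pq) (snd pq))"
    by blast
  have x0: "x0 \<in> K" "x0 \<notin> B q q'" for q q'
  proof -
    show "x0 \<in> K" by (rule x0K)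
    show "x0 \<notin> B q q'" using x0n by (metis UN_I UNIV_I fst_conv snd_conv)
  qed
  define \<sigma> where "\<sigma> q = (w q x0, q)" for q
  have "\<sigma> \<in> hom Qgroup E"
  proof (rule homI)
    fix q show "\<sigma> q \<in> carrier E" using sq x0 Ec by (auto simp: \<sigma>_def)
  next
    fix q q'
    have "w q x0 \<in> carrier A" "w q' x0 \<in> carrier A" using sq x0 by auto
    then show "\<sigma> (q \<otimes>\<^bsub>Qgroup\<^esub> q') = \<sigma> q \<otimes>\<^bsub>E\<^esub> \<sigma> q'"
      using x0(2)[of q q'] E_mult(1) x0(1) by (simp add: \<sigma>_def Q_mult B_def)
  qed
  moreover have "\<forall>q. snd (\<sigma> q) = q" by (simp add: \<sigma>_def)
  ultimately show False using nosec by blast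
qed

lemma H_not_cotorsion:
  assumes "uncountable K" "\<not> (\<exists>s\<in>hom Qgroup E. \<forall>q. snd (s q) = q)"
  shows "\<not> cotorsion H"
  unfolding cotorsion_def
proof
  assume "\<forall>E'::(('k \<Rightarrow> nat \<Rightarrow> 'a) set \<times> rat) monoid. comm_group E' \<and> carrier E' = carrier H \<times> UNIV
        \<and> (\<lambda>c. (c, 0)) \<in> hom H E' \<and> snd \<in> hom E' Qgroup
        \<longrightarrow> (\<exists>s \<in> hom Qgroup E'. \<forall>q. snd (s q) = q)"
  then have "\<exists>s \<in> hom Qgroup EH. \<forall>q. snd (s q) = q"
    using EH_group EH_incl EH_snd by (simp add: EH_def)
  then show False using no_section[OF assms] by blast
qed

end

theorem mainTheorem20:
  fixes A :: "'a monoid" and K :: "'k set"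
  assumes "comm_group A"
    and "\<not> cotorsion A"
    and "uncountable K"
  shows "\<exists>(T :: 'k set) (leq :: 'k \<Rightarrow> 'k \<Rightarrow> bool) (D :: 'k \<Rightarrow> nat set) (bp :: 'k \<Rightarrow> nat)
            (f :: 'k \<Rightarrow> 'k \<Rightarrow> nat \<Rightarrow> nat).
           directed_poset T leq \<and> T \<approx> K \<and> finite_pointed_diagram T leq D bp f
           \<and> \<not> cotorsion (H_group T leq D bp f A)"
proof -
  obtain E :: "('a \<times> rat) monoid" where E: "comm_group E" "carrier E = carrier A \<times> UNIV"
    "(\<lambda>c. (c, 0)) \<in> hom A E" "snd \<in> hom E Qgroup" "\<not> (\<exists>s\<in>hom Qgroup E. \<forall>q. snd (s q) = q)"
    using assms(2) unfolding cotorsion_def by blast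
  have "infinite K" using assms(3) uncountable_infinite by blast
  then have "Fpow K \<approx> K" by (rule eqpoll_Fpow)
  then have "K \<approx> Fpow K" by (rule eqpoll_sym)
  then obtain \<beta> where \<beta>: "bij_betw \<beta> K (Fpow K)" unfolding eqpoll_def by blast
  have c1: "constr K \<beta>" using \<beta> by (rule constr.intro)
  have c2: "constr2 K \<beta> A" using c1 assms(1) by (rule constr2.intro)
  have c3: "constr3 K \<beta> A E" using c2 E(1) by (rule constr3.intro) (rule constr3_axioms.intro[OF E(2) E(3) E(4)])
  interpret c: constr3 K \<beta> A E by (rule c3)
  have "directed_poset K (leqb \<beta>) \<and> K \<approx> K \<and> finite_pointed_diagram K (leqb \<beta>) (Db \<beta>) (\<lambda>_. 0) (fb \<beta>)
           \<and> \<not> cotorsion (H_group K (leqb \<beta>) (Db \<beta>) (\<lambda>_. 0) (fb \<beta>) A)"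
    using c.directed c.diagram eqpoll_refl c.H_not_cotorsion[OF assms(3) E(5)] by blast
  then show ?thesis by blast
qed

end
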